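(* For any ideal $\mathcal{I}$ the following are equivalent: (i) $\mathcal{BI}\not\leq_K\mathcal{I}$; (ii) $\mathcal{BI}\not\leq_{KB}\mathcal{I}$; (iii) $\mathcal{BI}\not\sqsubseteq\mathcal{I}$; (iv) for every partition $(X_{(i,j)})_{(i,j)\in\omega^2}$ of $\bigcup\mathcal{I}$ into sets belonging to $\mathcal{I}$ there is $A\notin\mathcal{I}$ such that $A\cap X_{(i,j)}$ is finite for all $(i,j)\in\omega^2$ and $A\cap\bigcup_{j}X_{(i,j)}$ is finite for all but finitely many $i\in\omega$; (v) for every $f:\bigcup\mathcal{I}\to\omega^2$ there is $A\notin\mathcal{I}$ such that $f[A]\in\mathrm{Fin}^2$ and $f|A$ is either constant or finite-to-one.
   Context: An ideal on an infinite countable set $X$ is a family $\mathcal{I}\subseteq\mathcal{P}(X)$ closed under subsets and finite unions, containing all finite subsets, with $X\notin\mathcal{I}$; $\bigcup\mathcal{I}=X$. Partitions may have empty pieces. $\mathrm{Fin}^2$: ideal on $\omega^2$ of all $A$ with only finitely many $n$ such that $\{m:(n,m)\in A\}$ is infinite. $\mathcal{BI}$: ideal on $\omega^3$ of all $A$ for which there is $k$ with $\{(j,l):(i,j,l)\in A\}\in\mathrm{Fin}^2$ for $i<k$ and finite for $i\ge k$. For ideals $\mathcal{I},\mathcal{J}$: $\mathcal{I}\leq_K\mathcal{J}$ if there is a function $f:\bigcup\mathcal{J}\to\bigcup\mathcal{I}$ with $f^{-1}[A]\in\mathcal{J}$ for all $A\in\mathcal{I}$; $\mathcal{I}\leq_{KB}\mathcal{J}$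 if such an $f$ can be chosen finite-to-one; $\mathcal{I}\sqsubseteq\mathcal{J}$ if such an $f$ can be chosen bijective. *)

theory Defs
  imports Main "HOL-Library.Countable_Set"
begin

definition is_ideal :: "'a set set \<Rightarrow> bool" where
  "is_ideal I \<longleftrightarrow>
     countable (\<Union>I) \<and> infinite (\<Union>I) \<and>
     (\<forall>A\<in>I. \<forall>B. B \<subseteq> A \<longrightarrow> B \<in> I) \<and>
     (\<forall>A\<in>I. \<forall>B\<in>I. A \<union> B \<in> I) \<and>
     (\<forall>A. A \<subseteq> \<Union>I \<and> finite A \<longrightarrow> A \<in> I) \<and>
     \<Union>I \<notin> I"

definition Fin2 :: "(nat \<times> nat) set set" where
  "Fin2 = {A. finite {n. infinite {m. (n, m) \<in> A}}}"

definition BI :: "(nat \<times> nat \<times> nat) set set" where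
  "BI = {A. \<exists>k. (\<forall>i<k. {(j, l). (i, j, l) \<in> A} \<in> Fin2) \<and>
                 (\<forall>i\<ge>k. finite {(j, l). (i, j, l) \<in> A})}"

definition katetov_witness :: "('b \<Rightarrow> 'a) \<Rightarrow> 'a set set \<Rightarrow> 'b set set \<Rightarrow> bool" where
  "katetov_witness f I J \<longleftrightarrow>
     f ` (\<Union>J) \<subseteq> \<Union>I \<and> (\<forall>A\<in>I. {x \<in> \<Union>J. f x \<in> A} \<in> J)"

definition katetov_le :: "'a set set \<Rightarrow> 'b set set \<Rightarrow> bool" where
  "katetov_le I J \<longleftrightarrow> (\<exists>f. katetov_witness f I J)"

definition katetov_blass_le :: "'a set set \<Rightarrow> 'b set set \<Rightarrow> bool" where
  "katetov_blass_le I J \<longleftrightarrow>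
     (\<exists>f. katetov_witness f I J \<and> (\<forall>y. finite {x \<in> \<Union>J. f x = y}))"

definition bij_katetov_le :: "'a set set \<Rightarrow> 'b set set \<Rightarrow> bool" where
  "bij_katetov_le I J \<longleftrightarrow>
     (\<exists>f. katetov_witness f I J \<and> bij_betw f (\<Union>J) (\<Union>I))"

end

theory Submission
  imports Defs
begin

definition smallp :: "('a \<Rightarrow> nat \<times> nat) \<Rightarrow> 'a set \<Rightarrow> bool" where
  "smallp pi A \<longleftrightarrow> (\<forall>p. finite {x\<in>A. pi x = p}) \<and> finite {i. infinite {x\<in>A. fst (pi x) = i}}"

definition badp :: "'a set set \<Rightarrow> ('a \<Rightarrow> nat \<times> nat) \<Rightarrow> bool" where
  "badp I pi \<longleftrightarrow> (\<forall>p. {x\<in>\<Union>I. pi x = p} \<in> I) \<and> (\<forall>A. A \<subseteq> \<Union>I \<longrightarrow> smallp pi A \<longrightarrow> A \<in> I)"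

lemma ideal_sub: "is_ideal I \<Longrightarrow> A \<in> I \<Longrightarrow> B \<subseteq> A \<Longrightarrow> B \<in> I"
  unfolding is_ideal_def by blast

lemma ideal_Un: "is_ideal I \<Longrightarrow> A \<in> I \<Longrightarrow> B \<in> I \<Longrightarrow> A \<union> B \<in> I"
  unfolding is_ideal_def by blast

lemma ideal_fin: "is_ideal I \<Longrightarrow> A \<subseteq> \<Union>I \<Longrightarrow> finite A \<Longrightarrow> A \<in> I"
  unfolding is_ideal_def by blast

lemma ideal_top: "is_ideal I \<Longrightarrow> \<Union>I \<notin> I"
  unfolding is_ideal_def by blast

lemma ideal_countable: "is_ideal I \<Longrightarrow> countable (\<Union>I)"
  unfolding is_ideal_def by blast

lemma ideal_UN:
  assumes "is_ideal I" "finite F" "\<forall>p\<in>F. X p \<in> I"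
  shows "(\<Union>p\<in>F. X p) \<in> I"
  using assms(2,3)
proof (induction F rule: finite_induct)
  case empty
  then show ?case using ideal_fin[OF assms(1)] by simp
next
  case (insert a F)
  then show ?case using ideal_Un[OF assms(1)] by simp
qed

lemma Fin2_finite: "finite S \<Longrightarrow> S \<in> Fin2"
proof -
  assume S: "finite S"
  have "{n. infinite {m. (n, m) \<in> S}} = {}"
  proof -
    have "finite {m. (n, m) \<in> S}" for n
    proof (rule finite_subset[of _ "snd ` S"])
      show "{m. (n, m) \<in> S} \<subseteq> snd ` S" by (auto intro: image_eqI[where x="(n, _)"])
      show "finite (snd ` S)" using S by simp
    qed
    then show ?thesis by auto
  qed
  then show ?thesis unfolding Fin2_def by simp
qed

lemma BI_iff: "B \<in> BI \<longleftrightarrow> (\<forall>i. {(j, l). (i, j, l) \<in> B} \<in> Fin2) \<and> finite {i. infinite {(j, l). (i, j, l) \<in> B}}"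
proof
  assume "B \<in> BI"
  then obtain k where k1: "\<forall>i<k. {(j, l). (i, j, l) \<in> B} \<in> Fin2"
     and k2: "\<forall>i\<ge>k. finite {(j, l). (i, j, l) \<in> B}" unfolding BI_def by blast
  have "{(j, l). (i, j, l) \<in> B} \<in> Fin2" for i
    using k1 k2 Fin2_finite by (cases "i < k") auto
  moreover have "{i. infinite {(j, l). (i, j, l) \<in> B}} \<subseteq> {..<k}"
  proof
    fix i assume "i \<in> {i. infinite {(j, l). (i, j, l) \<in> B}}"
    then have "\<not> finite {(j, l). (i, j, l) \<in> B}" by simp
    then have "\<not> k \<le> i" using k2 by blast
    then show "i \<in> {..<k}" by simp
  qed
  then have "finite {i. infinite {(j, l). (i, j, l) \<in> B}}" using finite_subset by blast
  ultimately show "(\<forall>i. {(j, l). (i, j, l) \<in> B} \<in> Fin2) \<and> finite {i. infinite {(j, l). (i, j, l) \<in> B}}" by blast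
next
  assume a: "(\<forall>i. {(j, l). (i, j, l) \<in> B} \<in> Fin2) \<and> finite {i. infinite {(j, l). (i, j, l) \<in> B}}"
  then have "finite {i. infinite {(j, l). (i, j, l) \<in> B}}" by (rule conjunct2)
  then obtain k where kk: "{i. infinite {(j, l). (i, j, l) \<in> B}} \<subseteq> {..<k}"
    using finite_nat_bounded by blast
  have "\<forall>i\<ge>k. finite {(j, l). (i, j, l) \<in> B}"
  proof (intro allI impI)
    fix i assume "k \<le> i"
    then have "i \<notin> {..<k}" by simp
    then show "finite {(j, l). (i, j, l) \<in> B}" using kk by blast
  qed
  then show "B \<in> BI" unfolding BI_def using a by blast
qed

lemma BI_finite: "finite B \<Longrightarrow> B \<in> BI"
proof -
  assume B: "finite B"
  have sec: "finite {(j, l). (i, j, l) \<in> B}" for i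
  proof (rule finite_subset[of _ "snd ` B"])
    show "{(j, l). (i, j, l) \<in> B} \<subseteq> snd ` B" by (auto intro: image_eqI[where x="(i, _)"])
    show "finite (snd ` B)" using B by simp
  qed
  show ?thesis unfolding BI_iff using sec Fin2_finite by simp
qed

lemma Union_BI: "\<Union>BI = UNIV"
proof -
  have "t \<in> \<Union>BI" for t using BI_finite[of "{t}"] by blast
  then show ?thesis by blast
qed

lemma inj_fin_fiber:
  assumes "inj_on f U" shows "finite {x\<in>U. f x = y}"
proof (cases "\<exists>x\<in>U. f x = y")
  case True
  then obtain x0 where x0: "x0 \<in> U" "f x0 = y" by blast
  have "{x\<in>U. f x = y} \<subseteq> {x0}" using x0 assms inj_onD by fastforce
  then show ?thesis using finite_subset by blast
next
  case False
  then have "{x\<in>U. f x = y} = {}" by blast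
  then show ?thesis by (metis finite.emptyI)
qed

lemma K_imp_bad:
  assumes I: "is_ideal I" and W: "katetov_witness f BI I"
  shows "badp I (\<lambda>x. (fst (f x), fst (snd (f x))))"
proof -
  define pi where "pi = (\<lambda>x. (fst (f x), fst (snd (f x))))"
  have pre: "\<And>B. B \<in> BI \<Longrightarrow> {x\<in>\<Union>I. f x \<in> B} \<in> I" using W unfolding katetov_witness_def by blast
  have fib: "{x\<in>\<Union>I. pi x = p} \<in> I" for p
  proof -
    obtain i j where p: "p = (i, j)" by (cases p)
    define B where "B = {t::nat\<times>nat\<times>nat. fst t = i \<and> fst (snd t) = j}"
    have "B \<in> BI" unfolding BI_iff
    proof
      show "\<forall>i'. {(j', l). (i', j', l) \<in> B} \<in> Fin2"
      proof
        fix i'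
        have "{n. infinite {m. (n, m) \<in> {(j', l). (i', j', l) \<in> B}}} \<subseteq> {j}"
        proof
          fix n assume n: "n \<in> {n. infinite {m. (n, m) \<in> {(j', l). (i', j', l) \<in> B}}}"
          show "n \<in> {j}"
          proof (rule ccontr)
            assume "n \<notin> {j}"
            then have "{m. (n, m) \<in> {(j', l). (i', j', l) \<in> B}} = {}" by (auto simp: B_def)
            then show False using n by simp
          qed
        qed
        then show "{(j', l). (i', j', l) \<in> B} \<in> Fin2" unfolding Fin2_def
          using finite_subset by auto
      qed
      have "{i'. infinite {(j', l). (i', j', l) \<in> B}} \<subseteq> {i}"
      proof
        fix n assume n: "n \<in> {i'. infinite {(j', l). (i', j', l) \<in> B}}"
        show "n \<in> {i}"
        proof (rule ccontr)
          assume "n \<notin> {i}"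
          then have "{(j', l). (n, j', l) \<in> B} = {}" by (auto simp: B_def)
          then show False using n by simp
        qed
      qed
      then show "finite {i'. infinite {(j', l). (i', j', l) \<in> B}}" using finite_subset by auto
    qed
    moreover have "{x\<in>\<Union>I. pi x = p} = {x\<in>\<Union>I. f x \<in> B}" by (auto simp: pi_def p B_def)
    ultimately show ?thesis using pre by simp
  qed
  have sm: "A \<in> I" if A: "A \<subseteq> \<Union>I" "smallp pi A" for A
  proof -
    have "f ` A \<in> BI" unfolding BI_iff
    proof
      show "\<forall>i. {(j, l). (i, j, l) \<in> f ` A} \<in> Fin2"
      proof
        fix i
        have "finite {m. (n, m) \<in> {(j, l). (i, j, l) \<in> f ` A}}" for n
        proof (rule finite_subset)
          show "{m. (n, m) \<in> {(j, l). (i, j, l) \<in> f ` A}} \<subseteq> (\<lambda>x. snd (snd (f x))) ` {x\<in>A. pi x = (i, n)}"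
          proof
            fix m assume "m \<in> {m. (n, m) \<in> {(j, l). (i, j, l) \<in> f ` A}}"
            then obtain x where "x \<in> A" "f x = (i, n, m)" by auto
            then show "m \<in> (\<lambda>x. snd (snd (f x))) ` {x\<in>A. pi x = (i, n)}"
              by (auto simp: pi_def intro!: image_eqI[where x=x])
          qed
          show "finite ((\<lambda>x. snd (snd (f x))) ` {x\<in>A. pi x = (i, n)})"
            using A(2) unfolding smallp_def by blast
        qed
        then show "{(j, l). (i, j, l) \<in> f ` A} \<in> Fin2" unfolding Fin2_def by simp
      qed
      have "{i. infinite {(j, l). (i, j, l) \<in> f ` A}} \<subseteq> {i. infinite {x\<in>A. fst (pi x) = i}}"
      proof
        fix i assume i: "i \<in> {i. infinite {(j, l). (i, j, l) \<in> f ` A}}"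
        show "i \<in> {i. infinite {x\<in>A. fst (pi x) = i}}"
        proof (rule ccontr)
          assume "i \<notin> {i. infinite {x\<in>A. fst (pi x) = i}}"
          then have fin: "finite {x\<in>A. fst (pi x) = i}" by simp
          have "{(j, l). (i, j, l) \<in> f ` A} \<subseteq> (\<lambda>x. snd (f x)) ` {x\<in>A. fst (pi x) = i}"
          proof
            fix t assume "t \<in> {(j, l). (i, j, l) \<in> f ` A}"
            then obtain x where "x \<in> A" "f x = (i, t)" by auto
            then show "t \<in> (\<lambda>x. snd (f x)) ` {x\<in>A. fst (pi x) = i}"
              by (auto simp: pi_def intro!: image_eqI[where x=x])
          qed
          moreover have "finite ((\<lambda>x. snd (f x)) ` {x\<in>A. fst (pi x) = i})" using fin by simp
          ultimately have "finite {(j, l). (i, j, l) \<in> f ` A}" by (rule finite_subset)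
          then show False using i by simp
        qed
      qed
      then show "finite {i. infinite {(j, l). (i, j, l) \<in> f ` A}}"
        using A(2) unfolding smallp_def using finite_subset by blast
    qed
    then have "{x\<in>\<Union>I. f x \<in> f ` A} \<in> I" using pre by blast
    moreover have "A \<subseteq> {x\<in>\<Union>I. f x \<in> f ` A}" using A(1) by auto
    ultimately show ?thesis using ideal_sub[OF I] by blast
  qed
  show ?thesis unfolding badp_def pi_def[symmetric] using fib sm by blast
qed

lemma bad_imp_witness:
  assumes I: "is_ideal I" and bad: "badp I pi"
  defines "f \<equiv> \<lambda>x. (fst (pi x), snd (pi x), to_nat_on (\<Union>I) x)"
  shows "katetov_witness f BI I \<and> inj_on f (\<Union>I)"
proof -
  define g where "g = to_nat_on (\<Union>I)"
  have ginj: "inj_on g (\<Union>I)" unfolding g_def using ideal_countable[OF I] by blast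
  have finj: "inj_on f (\<Union>I)"
  proof (rule inj_onI)
    fix x y assume "x \<in> \<Union>I" "y \<in> \<Union>I" "f x = f y"
    then show "x = y" using ginj inj_onD unfolding f_def g_def by fastforce
  qed
  have fib: "\<And>p. {x\<in>\<Union>I. pi x = p} \<in> I" and sm: "\<And>A. A \<subseteq> \<Union>I \<Longrightarrow> smallp pi A \<Longrightarrow> A \<in> I"
    using bad unfolding badp_def by blast+
  have "{x\<in>\<Union>I. f x \<in> B} \<in> I" if B: "B \<in> BI" for B
  proof -
    define sec where "sec i = {(j, l). (i, j, l) \<in> B}" for i
    have hr: "\<forall>i. sec i \<in> Fin2" and hf: "finite {i. infinite (sec i)}"
      using B unfolding BI_iff sec_def by blast+
    define F where "F = {p. infinite {l. (fst p, snd p, l) \<in> B}}"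
    have "F \<subseteq> Sigma {i. infinite (sec i)} (\<lambda>i. {n. infinite {m. (n, m) \<in> sec i}})"
    proof
      fix p assume "p \<in> F"
      then obtain i j where p: "p = (i, j)" and inf: "infinite {l. (i, j, l) \<in> B}"
        unfolding F_def by (cases p) auto
      have eq: "{m. (j, m) \<in> sec i} = {l. (i, j, l) \<in> B}" unfolding sec_def by simp
      have "Pair j ` {l. (i, j, l) \<in> B} \<subseteq> sec i" unfolding sec_def by auto
      moreover have "infinite (Pair j ` {l. (i, j, l) \<in> B})"
        using inf finite_imageD[of "Pair j"] by (auto simp: inj_on_def)
      ultimately have "infinite (sec i)" using finite_subset by blast
      then show "p \<in> Sigma {i. infinite (sec i)} (\<lambda>i. {n. infinite {m. (n, m) \<in> sec i}})"
        using p inf eq by simp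
    qed
    moreover have "finite (Sigma {i. infinite (sec i)} (\<lambda>i. {n. infinite {m. (n, m) \<in> sec i}}))"
      using hf hr unfolding Fin2_def by (intro finite_SigmaI) auto
    ultimately have Ffin: "finite F" using finite_subset by blast
    define A where "A = {x\<in>\<Union>I. f x \<in> B \<and> pi x \<notin> F}"
    have "smallp pi A" unfolding smallp_def
    proof
      show "\<forall>p. finite {x \<in> A. pi x = p}"
      proof
        fix p
        show "finite {x \<in> A. pi x = p}"
        proof (cases "p \<in> F")
          case True
          then have "{x \<in> A. pi x = p} = {}" unfolding A_def by auto
          then show ?thesis by (metis finite.emptyI)
        next
          case False
          have "g ` {x \<in> A. pi x = p} \<subseteq> {l. (fst p, snd p, l) \<in> B}"
            unfolding A_def f_def g_def by auto
          moreover have "finite {l. (fst p, snd p, l) \<in> B}" using False unfolding F_def by simp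
          ultimately have "finite (g ` {x \<in> A. pi x = p})" using finite_subset by blast
          moreover have "inj_on g {x \<in> A. pi x = p}"
            using ginj by (rule inj_on_subset) (auto simp: A_def)
          ultimately show ?thesis using finite_imageD by blast
        qed
      qed
      have "{i. infinite {x \<in> A. fst (pi x) = i}} \<subseteq> {i. infinite (sec i)}"
      proof
        fix i assume i: "i \<in> {i. infinite {x \<in> A. fst (pi x) = i}}"
        show "i \<in> {i. infinite (sec i)}"
        proof (rule ccontr)
          assume "i \<notin> {i. infinite (sec i)}"
          then have fs: "finite (sec i)" by simp
          define h where "h = (\<lambda>x. (snd (pi x), g x))"
          have "h ` {x \<in> A. fst (pi x) = i} \<subseteq> sec i"
            unfolding h_def sec_def A_def f_def g_def by auto
          then have "finite (h ` {x \<in> A. fst (pi x) = i})" using fs finite_subset by blast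
          moreover have "inj_on h {x \<in> A. fst (pi x) = i}"
          proof (rule inj_onI)
            fix x y assume "x \<in> {x \<in> A. fst (pi x) = i}" "y \<in> {x \<in> A. fst (pi x) = i}" "h x = h y"
            then show "x = y" using ginj inj_onD unfolding h_def A_def by fastforce
          qed
          ultimately show False using i finite_imageD by blast
        qed
      qed
      then show "finite {i. infinite {x \<in> A. fst (pi x) = i}}" using hf finite_subset by blast
    qed
    moreover have "A \<subseteq> \<Union>I" unfolding A_def by blast
    ultimately have AI: "A \<in> I" using sm by blast
    have UI: "(\<Union>p\<in>F. {x\<in>\<Union>I. pi x = p}) \<in> I" by (rule ideal_UN[OF I Ffin]) (use fib in blast)
    have "{x\<in>\<Union>I. f x \<in> B} \<subseteq> (\<Union>p\<in>F. {x\<in>\<Union>I. pi x = p}) \<union> A" unfolding A_def by auto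
    then show ?thesis using ideal_sub[OF I ideal_Un[OF I UI AI]] by blast
  qed
  then have "katetov_witness f BI I" unfolding katetov_witness_def Union_BI by blast
  then show ?thesis using finj by blast
qed

lemma bad_infinite:
  assumes I: "is_ideal I" and bad: "badp I pi"
  shows "\<exists>Y\<in>I. infinite Y"
proof (rule ccontr)
  assume "\<not> (\<exists>Y\<in>I. infinite Y)"
  then have allfin: "\<And>Y. Y \<in> I \<Longrightarrow> finite Y" by blast
  have fib: "\<And>p. {x\<in>\<Union>I. pi x = p} \<in> I" and sm: "\<And>A. A \<subseteq> \<Union>I \<Longrightarrow> smallp pi A \<Longrightarrow> A \<in> I"
    using bad unfolding badp_def by blast+
  have ff: "finite {x\<in>A. pi x = p}" if "A \<subseteq> \<Union>I" for A p
    using allfin[OF fib[of p]] finite_subset[of "{x\<in>A. pi x = p}" "{x\<in>\<Union>I. pi x = p}"] that by blast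
  have rows: "finite {x\<in>\<Union>I. fst (pi x) = i}" for i
  proof -
    let ?R = "{x\<in>\<Union>I. fst (pi x) = i}"
    have "{i'. infinite {x\<in>?R. fst (pi x) = i'}} \<subseteq> {i}"
    proof
      fix i' assume i': "i' \<in> {i'. infinite {x\<in>?R. fst (pi x) = i'}}"
      show "i' \<in> {i}"
      proof (rule ccontr)
        assume "i' \<notin> {i}"
        then have "{x\<in>?R. fst (pi x) = i'} = {}" by auto
        then show False using i' by (metis (no_types, lifting) finite.emptyI mem_Collect_eq)
      qed
    qed
    then have "finite {i'. infinite {x\<in>?R. fst (pi x) = i'}}" using finite_subset by blast
    moreover have RU: "?R \<subseteq> \<Union>I" by blast
    moreover have "\<forall>p. finite {x\<in>?R. pi x = p}" using ff[OF RU] by blast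
    ultimately have "smallp pi ?R" unfolding smallp_def by blast
    then show ?thesis using allfin[OF sm[OF RU]] by blast
  qed
  have a1: "\<forall>p. finite {x\<in>\<Union>I. pi x = p}" using ff[of "\<Union>I"] by blast
  have a2: "{i. infinite {x\<in>\<Union>I. fst (pi x) = i}} = {}" using rows by blast
  have "smallp pi (\<Union>I)" unfolding smallp_def using a1 a2 by (metis finite.emptyI)
  then have "\<Union>I \<in> I" using sm[of "\<Union>I"] by blast
  then show False using ideal_top[OF I] by blast
qed

lemma bij_from_inj:
  assumes I: "is_ideal I" and W: "katetov_witness f BI I" and inj: "inj_on f (\<Union>I)"
    and Y: "Y \<in> I" "infinite Y"
  shows "bij_katetov_le BI I"
proof -
  let ?U = "\<Union>I"
  have YU: "Y \<subseteq> ?U" using Y by blast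
  have cY: "countable Y" using countable_subset[OF YU ideal_countable[OF I]] .
  define V where "V = UNIV - f ` (?U - Y)"
  have fYV: "f ` Y \<subseteq> V"
  proof
    fix t assume "t \<in> f ` Y"
    then obtain x where x: "x \<in> Y" "t = f x" by blast
    have "t \<notin> f ` (?U - Y)"
    proof
      assume "t \<in> f ` (?U - Y)"
      then obtain z where z: "z \<in> ?U - Y" "t = f z" by blast
      then have fzx: "f z = f x" using x by simp
      have "z \<in> ?U" "x \<in> ?U" using z x YU by auto
      then have "z = x" using inj_onD[OF inj fzx] by blast
      then show False using z x by blast
    qed
    then show "t \<in> V" unfolding V_def by blast
  qed
  have "infinite (f ` Y)" using Y(2) finite_imageD inj_on_subset[OF inj YU] by blast
  then have iV: "infinite V" using fYV finite_subset by blast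
  have cV: "countable V" by simp
  define k where "k = from_nat_into V \<circ> to_nat_on Y"
  have bk: "bij_betw k Y V" unfolding k_def
    using bij_betw_trans[OF to_nat_on_infinite[OF cY Y(2)] bij_betw_from_nat_into[OF cV iV]] .
  define h where "h x = (if x \<in> Y then k x else f x)" for x
  have b1: "bij_betw h (?U - Y) (f ` (?U - Y))"
  proof -
    have "bij_betw f (?U - Y) (f ` (?U - Y))"
      using inj_on_subset[OF inj] by (intro bij_betw_imageI) auto
    then show ?thesis by (rule bij_betw_cong[THEN iffD1, rotated]) (auto simp: h_def)
  qed
  have b2: "bij_betw h Y V"
    using bk by (rule bij_betw_cong[THEN iffD1, rotated]) (auto simp: h_def)
  have "bij_betw h ((?U - Y) \<union> Y) (f ` (?U - Y) \<union> V)"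
    by (rule bij_betw_combine[OF b1 b2]) (auto simp: V_def)
  moreover have "(?U - Y) \<union> Y = ?U" using YU by blast
  moreover have "f ` (?U - Y) \<union> V = UNIV" unfolding V_def by blast
  ultimately have bh: "bij_betw h ?U UNIV" by simp
  have "{x\<in>?U. h x \<in> B} \<in> I" if "B \<in> BI" for B
  proof -
    have "{x\<in>?U. f x \<in> B} \<in> I" using W that unfolding katetov_witness_def by blast
    then have "{x\<in>?U. f x \<in> B} \<union> Y \<in> I" using ideal_Un[OF I _ Y(1)] by blast
    moreover have "{x\<in>?U. h x \<in> B} \<subseteq> {x\<in>?U. f x \<in> B} \<union> Y" unfolding h_def by auto
    ultimately show ?thesis using ideal_sub[OF I] by blast
  qed
  then have "katetov_witness h BI I" unfolding katetov_witness_def Union_BI by blast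
  then show ?thesis unfolding bij_katetov_le_def using bh Union_BI by metis
qed

lemma P4_iff:
  fixes I :: "'a set set"
  assumes I: "is_ideal I"
  shows "(\<forall>X :: nat \<times> nat \<Rightarrow> 'a set.
               ((\<forall>p. X p \<in> I) \<and> (\<Union>p. X p) = \<Union>I \<and>
                (\<forall>p q. p \<noteq> q \<longrightarrow> X p \<inter> X q = {}))
               \<longrightarrow> (\<exists>A. A \<subseteq> \<Union>I \<and> A \<notin> I \<and>
                      (\<forall>p. finite (A \<inter> X p)) \<and>
                      finite {i. infinite (A \<inter> (\<Union>j. X (i, j)))}))
         \<longleftrightarrow> \<not> (\<exists>pi. badp I pi)" (is "?L \<longleftrightarrow> _")
proof
  assume L: ?L
  show "\<not> (\<exists>pi. badp I pi)"
  proof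
    assume "\<exists>pi. badp I pi"
    then obtain pi where bad: "badp I pi" by blast
    have fib: "\<And>p. {x\<in>\<Union>I. pi x = p} \<in> I" and sm: "\<And>A. A \<subseteq> \<Union>I \<Longrightarrow> smallp pi A \<Longrightarrow> A \<in> I"
      using bad unfolding badp_def by blast+
    define X where "X p = {x\<in>\<Union>I. pi x = p}" for p
    have "(\<forall>p. X p \<in> I) \<and> (\<Union>p. X p) = \<Union>I \<and> (\<forall>p q. p \<noteq> q \<longrightarrow> X p \<inter> X q = {})"
      using fib unfolding X_def by auto
    note LX = L[rule_format, OF this]
    then obtain A where A: "A \<subseteq> \<Union>I" "A \<notin> I" "\<forall>p. finite (A \<inter> X p)"
      "finite {i. infinite (A \<inter> (\<Union>j. X (i, j)))}" by (elim exE conjE)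
    have e1: "{x\<in>A. pi x = p} = A \<inter> X p" for p using A(1) unfolding X_def by auto
    have e2: "{x\<in>A. fst (pi x) = i} = A \<inter> (\<Union>j. X (i, j))" for i
      using A(1) unfolding X_def by (auto intro: prod.exhaust_sel)
    have "smallp pi A" unfolding smallp_def e1 e2 using A(3,4) by simp
    then show False using sm A by blast
  qed
next
  assume nb: "\<not> (\<exists>pi. badp I pi)"
  show ?L
  proof (intro allI impI)
    fix X :: "nat \<times> nat \<Rightarrow> 'a set"
    assume P: "(\<forall>p. X p \<in> I) \<and> (\<Union>p. X p) = \<Union>I \<and> (\<forall>p q. p \<noteq> q \<longrightarrow> X p \<inter> X q = {})"
    define pi where "pi x = (SOME p. x \<in> X p)" for x
    have in1: "x \<in> X (pi x)" if "x \<in> \<Union>I" for x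
    proof -
      have "\<exists>p. x \<in> X p" using that P by blast
      then show ?thesis unfolding pi_def by (rule someI_ex)
    qed
    have in2: "pi x = p" if "x \<in> X p" for x p
    proof -
      have "x \<in> \<Union>I" using that P by blast
      then have "x \<in> X (pi x)" by (rule in1)
      then show ?thesis using that P by blast
    qed
    have XU: "X p \<subseteq> \<Union>I" for p using P by blast
    have fibeq: "{x\<in>\<Union>I. pi x = p} = X p" for p using in1 in2 XU by blast
    have nbp: "\<not> badp I pi" using nb by blast
    have XI: "\<forall>p. X p \<in> I" using P by (rule conjunct1)
    then have "\<forall>p. {x\<in>\<Union>I. pi x = p} \<in> I" unfolding fibeq .
    then have "\<not> (\<forall>A. A \<subseteq> \<Union>I \<longrightarrow> smallp pi A \<longrightarrow> A \<in> I)"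
      using nbp unfolding badp_def by simp
    then obtain A where A: "A \<subseteq> \<Union>I" "smallp pi A" "A \<notin> I" by blast
    have e1: "{x\<in>A. pi x = p} = A \<inter> X p" for p using A(1) in1 in2 by blast
    have e2: "{x\<in>A. fst (pi x) = i} = A \<inter> (\<Union>j. X (i, j))" for i
    proof
      show "{x\<in>A. fst (pi x) = i} \<subseteq> A \<inter> (\<Union>j. X (i, j))"
      proof
        fix x assume x: "x \<in> {x\<in>A. fst (pi x) = i}"
        then have "x \<in> X (pi x)" using A(1) in1 by blast
        then have "x \<in> X (i, snd (pi x))" using x by (metis (mono_tags, lifting) mem_Collect_eq prod.collapse)
        then show "x \<in> A \<inter> (\<Union>j. X (i, j))" using x by blast
      qed
      show "A \<inter> (\<Union>j. X (i, j)) \<subseteq> {x\<in>A. fst (pi x) = i}"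
        using in2 by fastforce
    qed
    show "\<exists>A. A \<subseteq> \<Union>I \<and> A \<notin> I \<and> (\<forall>p. finite (A \<inter> X p)) \<and>
                      finite {i. infinite (A \<inter> (\<Union>j. X (i, j)))}"
      using A unfolding smallp_def e1 e2 by blast
  qed
qed

lemma P5_iff:
  fixes I :: "'a set set"
  assumes I: "is_ideal I"
  shows "(\<forall>f :: 'a \<Rightarrow> nat \<times> nat.
               \<exists>A. A \<subseteq> \<Union>I \<and> A \<notin> I \<and> f ` A \<in> Fin2 \<and>
                   ((\<exists>c. \<forall>x\<in>A. f x = c) \<or> (\<forall>y. finite {x \<in> A. f x = y})))
         \<longleftrightarrow> \<not> (\<exists>pi. badp I pi)" (is "?L \<longleftrightarrow> _")
proof
  assume L: ?L
  show "\<not> (\<exists>pi. badp I pi)"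
  proof
    assume "\<exists>pi. badp I pi"
    then obtain pi where bad: "badp I pi" by blast
    have fib: "\<And>p. {x\<in>\<Union>I. pi x = p} \<in> I" and sm: "\<And>A. A \<subseteq> \<Union>I \<Longrightarrow> smallp pi A \<Longrightarrow> A \<in> I"
      using bad unfolding badp_def by blast+
    obtain A where A: "A \<subseteq> \<Union>I" "A \<notin> I" "pi ` A \<in> Fin2"
      "(\<exists>c. \<forall>x\<in>A. pi x = c) \<or> (\<forall>y. finite {x \<in> A. pi x = y})" using L by blast
    show False
    proof (cases "\<exists>c. \<forall>x\<in>A. pi x = c")
      case True
      then obtain c where "\<forall>x\<in>A. pi x = c" by blast
      then have "A \<subseteq> {x\<in>\<Union>I. pi x = c}" using A(1) by blast
      then show False using ideal_sub[OF I fib] A(2) by blast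
    next
      case False
      then have ft: "\<forall>y. finite {x \<in> A. pi x = y}" using A(4) by blast
      have "{i. infinite {x\<in>A. fst (pi x) = i}} \<subseteq> {n. infinite {m. (n, m) \<in> pi ` A}}"
      proof
        fix i assume i: "i \<in> {i. infinite {x\<in>A. fst (pi x) = i}}"
        show "i \<in> {n. infinite {m. (n, m) \<in> pi ` A}}"
        proof (rule ccontr)
          assume "i \<notin> {n. infinite {m. (n, m) \<in> pi ` A}}"
          then have fm: "finite {m. (i, m) \<in> pi ` A}" by simp
          have "{x\<in>A. fst (pi x) = i} \<subseteq> (\<Union>m\<in>{m. (i, m) \<in> pi ` A}. {x\<in>A. pi x = (i, m)})"
          proof
            fix x assume x: "x \<in> {x\<in>A. fst (pi x) = i}"
            then have "pi x = (i, snd (pi x))" by (metis (mono_tags, lifting) mem_Collect_eq prod.collapse)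
            then show "x \<in> (\<Union>m\<in>{m. (i, m) \<in> pi ` A}. {x\<in>A. pi x = (i, m)})"
              using x by (metis (mono_tags, lifting) UN_iff image_eqI mem_Collect_eq)
          qed
          moreover have "finite (\<Union>m\<in>{m. (i, m) \<in> pi ` A}. {x\<in>A. pi x = (i, m)})"
            using fm ft by blast
          ultimately show False using i finite_subset by blast
        qed
      qed
      then have "finite {i. infinite {x\<in>A. fst (pi x) = i}}"
        using A(3) unfolding Fin2_def using finite_subset by blast
      then have "smallp pi A" unfolding smallp_def using ft by blast
      then show False using sm A by blast
    qed
  qed
next
  assume nb: "\<not> (\<exists>pi. badp I pi)"
  show ?L
  proof
    fix f :: "'a \<Rightarrow> nat \<times> nat"
    have "\<not> badp I f" using nb by blast
    then consider p where "{x\<in>\<Union>I. f x = p} \<notin> I" | A where "A \<subseteq> \<Union>I" "smallp f A" "A \<notin> I"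
      unfolding badp_def by blast
    then show "\<exists>A. A \<subseteq> \<Union>I \<and> A \<notin> I \<and> f ` A \<in> Fin2 \<and>
                   ((\<exists>c. \<forall>x\<in>A. f x = c) \<or> (\<forall>y. finite {x \<in> A. f x = y}))"
    proof cases
      case (1 p)
      let ?A = "{x\<in>\<Union>I. f x = p}"
      have "f ` ?A \<subseteq> {p}" by blast
      then have "finite (f ` ?A)" using finite_subset by blast
      then have F2: "f ` ?A \<in> Fin2" by (rule Fin2_finite)
      have c: "\<exists>c. \<forall>x\<in>?A. f x = c" by blast
      have sub: "?A \<subseteq> \<Union>I" by blast
      show ?thesis
        by (rule exI[of _ ?A]) (intro conjI sub 1 F2 disjI1 c)
    next
      case (2 A)
      have "{n. infinite {m. (n, m) \<in> f ` A}} \<subseteq> {i. infinite {x\<in>A. fst (f x) = i}}"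
      proof
        fix n assume n: "n \<in> {n. infinite {m. (n, m) \<in> f ` A}}"
        show "n \<in> {i. infinite {x\<in>A. fst (f x) = i}}"
        proof (rule ccontr)
          assume "n \<notin> {i. infinite {x\<in>A. fst (f x) = i}}"
          then have "finite ((\<lambda>x. snd (f x)) ` {x\<in>A. fst (f x) = n})" by simp
          moreover have "{m. (n, m) \<in> f ` A} \<subseteq> (\<lambda>x. snd (f x)) ` {x\<in>A. fst (f x) = n}"
          proof
            fix m assume "m \<in> {m. (n, m) \<in> f ` A}"
            then obtain x where "x \<in> A" "f x = (n, m)" by auto
            then show "m \<in> (\<lambda>x. snd (f x)) ` {x\<in>A. fst (f x) = n}"
              by (auto intro!: image_eqI[where x=x])
          qed
          ultimately show False using n finite_subset by blast
        qed
      qed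
      then have "f ` A \<in> Fin2" unfolding Fin2_def using 2(2) unfolding smallp_def
        using finite_subset by blast
      then show ?thesis using 2 unfolding smallp_def by blast
    qed
  qed
qed

lemma K_iff_bad:
  assumes I: "is_ideal I"
  shows "katetov_le BI I \<longleftrightarrow> (\<exists>pi. badp I pi)"
proof
  assume "katetov_le BI I"
  then obtain f where "katetov_witness f BI I" unfolding katetov_le_def by blast
  then show "\<exists>pi. badp I pi" using K_imp_bad[OF I] by blast
next
  assume "\<exists>pi. badp I pi"
  then obtain pi where "badp I pi" by blast
  then show "katetov_le BI I" unfolding katetov_le_def using bad_imp_witness[OF I] by blast
qed

lemma bad_KB:
  assumes I: "is_ideal I" and bad: "badp I pi"
  shows "katetov_blass_le BI I"
proof -
  obtain f where W: "katetov_witness f BI I" and inj: "inj_on f (\<Union>I)"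
    using bad_imp_witness[OF I bad] by blast
  have fin: "\<forall>y. finite {x\<in>\<Union>I. f x = y}"
    using inj_fin_fiber[OF inj] by blast
  show ?thesis unfolding katetov_blass_le_def
    using W fin by (intro exI[of _ f] conjI) assumption+
qed

lemma bad_bij:
  assumes I: "is_ideal I" and bad: "badp I pi"
  shows "bij_katetov_le BI I"
proof -
  obtain f where "katetov_witness f BI I" "inj_on f (\<Union>I)" using bad_imp_witness[OF I bad] by blast
  moreover obtain Y where "Y \<in> I" "infinite Y" using bad_infinite[OF I bad] by blast
  ultimately show ?thesis using bij_from_inj[OF I] by blast
qed

theorem proposition4p4:
  fixes I :: "'a set set"
  assumes "is_ideal I"
  shows "(\<not> katetov_le BI I \<longleftrightarrow> \<not> katetov_blass_le BI I)
       \<and> (\<not> katetov_le BI I \<longleftrightarrow> \<not> bij_katetov_le BI I)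
       \<and> (\<not> katetov_le BI I \<longleftrightarrow>
            (\<forall>X :: nat \<times> nat \<Rightarrow> 'a set.
               ((\<forall>p. X p \<in> I) \<and> (\<Union>p. X p) = \<Union>I \<and>
                (\<forall>p q. p \<noteq> q \<longrightarrow> X p \<inter> X q = {}))
               \<longrightarrow> (\<exists>A. A \<subseteq> \<Union>I \<and> A \<notin> I \<and>
                      (\<forall>p. finite (A \<inter> X p)) \<and>
                      finite {i. infinite (A \<inter> (\<Union>j. X (i, j)))})))
       \<and> (\<not> katetov_le BI I \<longleftrightarrow>
            (\<forall>f :: 'a \<Rightarrow> nat \<times> nat.
               \<exists>A. A \<subseteq> \<Union>I \<and> A \<notin> I \<and> f ` A \<in> Fin2 \<and>
                   ((\<exists>c. \<forall>x\<in>A. f x = c) \<or> (\<forall>y. finite {x \<in> A. f x = y}))))"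
proof -
  note I = assms
  have KB: "katetov_blass_le BI I \<Longrightarrow> katetov_le BI I"
    unfolding katetov_blass_le_def katetov_le_def by blast
  have BJ: "bij_katetov_le BI I \<Longrightarrow> katetov_le BI I"
    unfolding bij_katetov_le_def katetov_le_def by blast
  have K: "katetov_le BI I \<longleftrightarrow> (\<exists>pi. badp I pi)" by (rule K_iff_bad[OF I])
  show ?thesis
    unfolding P4_iff[OF I] P5_iff[OF I]
    using KB BJ K bad_KB[OF I] bad_bij[OF I] by blast
qed

end
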